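(* Under the standing assumptions below, the solution operator $S:V^*\to V$, $u\mapsto y$, of the variational inequality (VI) is pointwise-a.e. convex: for all $u_1,u_2\in V^*$ and all $\lambda\in[0,1]$, $$S(\lambda u_1+(1-\lambda)u_2)\le\lambda S(u_1)+(1-\lambda)S(u_2)\quad\mu\text{-a.e. in }\Omega.$$
   Context: Standing assumptions: (i) $(\Omega,\Sigma,\mu)$ is a complete finite measure space with real Lebesgue spaces $L^p(\Omega)$, $1\le p\le\infty$. (ii) $V$ is a real separable Hilbert space with $V\subset L^q(\Omega)$, the embedding $V\hookrightarrow L^q(\Omega)$ continuous, compact and dense, for a fixed $q\in[2,\infty]$; moreover $[v]_{a_1}^{a_2}:=\min(a_2,\max(a_1,v))$ (pointwise a.e.) belongs to $V$ for all $v\in V$ and all $a_1,a_2\in[-\infty,\infty]$ with $a_1\le0\le a_2$. (iii) $U:=L^s(\Omega)$ with fixed $s\in(1,\infty)$, $s\ge q'$ (where $1/q+1/q'=1$), identified with a subset of $V^*$ via $L^s(\Omega)\cong L^{s'}(\Omega)^*\hookrightarrow L^q(\Omega)^*\hookrightarrow V^*$. (iv) $A:V\to V^*$ is linear and continuous with $\langle Av,v\rangle_V\ge c\|v\|_V^2$ for all $v\in V$ and some $c>0$, and $\min(\langle Av,[v]_{a_1}^{a_2}\rangle_V,\langle A[v]_{a_1}^{a_2},v\rangle_V)\ge\langle A[v]_{a_1}^{a_2},[v]_{a_1}^{a_2}\rangle_V$ for all $v\in V$ and all $a_1\le0\le a_2$ in $[-\infty,\infty]$. (v) $f:\mathbb{R}\to\mathbb{R}$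 is nondecreasing, globally Lipschitz and concave, identified with $f:V\to V^*$, $\langle f(v),w\rangle_V:=(f(v),w)_{L^2(\Omega)}$. (vi) $K\subset V$ is nonempty, closed, convex with: $v\in K$, $z\in V$ $\Rightarrow$ $v+\max(0,z)\in K$; and $v_1,v_2\in K\Rightarrow\min(v_1,v_2)\in K$. (VI): for $u\in V^*$ find $y\in K$ with $\langle Ay+f(y)-u,v-y\rangle_V\ge0$ for all $v\in K$. It is known that (VI) has a unique solution $S(u)$ for every $u\in V^*$ and that $S:V^*\to V$ is globally Lipschitz. *)

theory Defs
  imports "HOL-Analysis.Analysis" "HOL-Probability.Essential_Supremum"
begin

definition Lp_mem :: "'a measure \<Rightarrow> ereal \<Rightarrow> ('a \<Rightarrow> real) \<Rightarrow> bool" where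
  "Lp_mem M p g \<longleftrightarrow> g \<in> borel_measurable M \<and>
     (if p = \<infinity> then (\<exists>C. AE x in M. \<bar>g x\<bar> \<le> C)
      else integrable M (\<lambda>x. \<bar>g x\<bar> powr real_of_ereal p))"

definition Lp_norm :: "'a measure \<Rightarrow> ereal \<Rightarrow> ('a \<Rightarrow> real) \<Rightarrow> real" where
  "Lp_norm M p g =
     (if p = \<infinity> then real_of_ereal (esssup M (\<lambda>x. ereal \<bar>g x\<bar>))
      else (\<integral>x. \<bar>g x\<bar> powr real_of_ereal p \<partial>M) powr (1 / real_of_ereal p))"

definition clip :: "ereal \<Rightarrow> ereal \<Rightarrow> real \<Rightarrow> real" where
  "clip a1 a2 t = real_of_ereal (min a2 (max a1 (ereal t)))"

text \<open>Standing assumption (ii): V (a real separable Hilbert space, here a type) is embedded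
  via the injective linear map emb into L^q(M); the embedding is continuous, compact and dense,
  and V is closed under truncations.\<close>
definition embedding_ok :: "'a measure \<Rightarrow> ereal \<Rightarrow> ('v::{real_inner,complete_space} \<Rightarrow> 'a \<Rightarrow> real) \<Rightarrow> bool" where
  "embedding_ok M q emb \<longleftrightarrow>
     (\<exists>D::'v set. countable D \<and> closure D = UNIV) \<and>
     (\<forall>v w. AE x in M. emb (v + w) x = emb v x + emb w x) \<and>
     (\<forall>c v. AE x in M. emb (c *\<^sub>R v) x = c * emb v x) \<and>
     (\<forall>v. Lp_mem M q (emb v)) \<and>
     (\<forall>v. (AE x in M. emb v x = 0) \<longrightarrow> v = 0) \<and>
     (\<exists>C. \<forall>v. Lp_norm M q (emb v) \<le> C * norm v) \<and>
     (\<forall>vs::nat \<Rightarrow> 'v. bounded (range vs) \<longrightarrow>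
        (\<exists>r g. strict_mono r \<and> Lp_mem M q g \<and>
           (\<lambda>n. Lp_norm M q (\<lambda>x. emb (vs (r n)) x - g x)) \<longlonglongrightarrow> 0)) \<and>
     (\<forall>g. Lp_mem M q g \<longrightarrow> (\<forall>e>0. \<exists>v. Lp_norm M q (\<lambda>x. emb v x - g x) < e)) \<and>
     (\<forall>v a1 a2. a1 \<le> 0 \<and> 0 \<le> a2 \<longrightarrow>
        (\<exists>w. AE x in M. emb w x = clip a1 a2 (emb v x)))"

text \<open>Standing assumption (iv) for A : V -> V^*, duality pairing <A v, w> = A v w.\<close>
definition operator_ok :: "'a measure \<Rightarrow> ('v::{real_inner,complete_space} \<Rightarrow> 'a \<Rightarrow> real)
     \<Rightarrow> ('v \<Rightarrow> 'v \<Rightarrow>\<^sub>L real) \<Rightarrow> bool" where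
  "operator_ok M emb A \<longleftrightarrow>
     bounded_linear A \<and>
     (\<exists>c>0. \<forall>v. A v v \<ge> c * (norm v)\<^sup>2) \<and>
     (\<forall>v w a1 a2. a1 \<le> 0 \<and> 0 \<le> a2 \<and> (AE x in M. emb w x = clip a1 a2 (emb v x)) \<longrightarrow>
        min (A v w) (A w v) \<ge> A w w)"

definition nonlin_ok :: "(real \<Rightarrow> real) \<Rightarrow> bool" where
  "nonlin_ok f \<longleftrightarrow> mono f \<and> (\<exists>L. \<forall>x y. \<bar>f x - f y\<bar> \<le> L * \<bar>x - y\<bar>) \<and> concave_on UNIV f"

definition admissible_set_ok :: "'a measure \<Rightarrow> ('v::{real_inner,complete_space} \<Rightarrow> 'a \<Rightarrow> real)
     \<Rightarrow> 'v set \<Rightarrow> bool" where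
  "admissible_set_ok M emb K \<longleftrightarrow>
     K \<noteq> {} \<and> closed K \<and> convex K \<and>
     (\<forall>v\<in>K. \<forall>z w. (AE x in M. emb w x = max 0 (emb z x)) \<longrightarrow> v + w \<in> K) \<and>
     (\<forall>v1\<in>K. \<forall>v2\<in>K. \<forall>w. (AE x in M. emb w x = min (emb v1 x) (emb v2 x)) \<longrightarrow> w \<in> K)"

definition VI_solution :: "'a measure \<Rightarrow> ('v::{real_inner,complete_space} \<Rightarrow> 'a \<Rightarrow> real)
     \<Rightarrow> ('v \<Rightarrow> 'v \<Rightarrow>\<^sub>L real) \<Rightarrow> (real \<Rightarrow> real) \<Rightarrow> 'v set \<Rightarrow> ('v \<Rightarrow>\<^sub>L real) \<Rightarrow> 'v \<Rightarrow> bool" where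
  "VI_solution M emb A f K u y \<longleftrightarrow>
     y \<in> K \<and>
     (\<forall>v\<in>K. A y (v - y) + (\<integral>x. f (emb y x) * emb (v - y) x \<partial>M) - u (v - y) \<ge> 0)"

end

theory Submission imports Defs begin

lemma Lp_sq:
  assumes fm: "finite_measure M" and q: "2 \<le> q" and g: "Lp_mem M q g"
  shows "integrable M (\<lambda>x. (g x)^2)"
proof -
  have gm: "g \<in> borel_measurable M" using g by (simp add: Lp_mem_def)
  show ?thesis
  proof (cases "q = \<infinity>")
    case True
    then obtain C where C: "AE x in M. \<bar>g x\<bar> \<le> C" using g by (auto simp: Lp_mem_def)
    have ic: "integrable M (\<lambda>x. C^2)"
      using fm by (simp add: finite_measure.integrable_const)
    show ?thesis
    proof (rule Bochner_Integration.integrable_bound[OF ic])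
      show "(\<lambda>x. (g x)^2) \<in> borel_measurable M" using gm by measurable
      show "AE x in M. norm ((g x)^2) \<le> norm (C^2)"
        using C by eventually_elim (metis abs_ge_zero power2_abs power_mono abs_power2 abs_idempotent real_norm_def)
    qed
  next
    case False
    then obtain r where r: "q = ereal r" using q by (cases q) auto
    have r2: "2 \<le> r" using q r by simp
    have ig: "integrable M (\<lambda>x. \<bar>g x\<bar> powr r)" using g False r by (simp add: Lp_mem_def)
    have ic: "integrable M (\<lambda>x. 1 + \<bar>g x\<bar> powr r)"
      using ig fm by (intro Bochner_Integration.integrable_add finite_measure.integrable_const)
    show ?thesis
    proof (rule Bochner_Integration.integrable_bound[OF ic])
      show "(\<lambda>x. (g x)^2) \<in> borel_measurable M" using gm by measurable
      show "AE x in M. norm ((g x)^2) \<le> norm (1 + \<bar>g x\<bar> powr r)"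
      proof (rule AE_I2)
        fix x
        have "(g x)^2 \<le> 1 + \<bar>g x\<bar> powr r"
        proof (cases "\<bar>g x\<bar> \<le> 1")
          case True
          then have "(g x)^2 \<le> 1" by (metis abs_ge_zero power2_abs power_le_one)
          moreover have "0 \<le> \<bar>g x\<bar> powr r" by simp
          ultimately show ?thesis by linarith
        next
          case False
          have "(g x)^2 = \<bar>g x\<bar> powr 2" using False
            by (simp add: powr_numeral)
          also have "\<dots> \<le> \<bar>g x\<bar> powr r" using False r2 by (intro powr_mono) auto
          finally show ?thesis by simp
        qed
        then show "norm ((g x)^2) \<le> norm (1 + \<bar>g x\<bar> powr r)" by simp
      qed
    qed
  qed
qed

lemma prod_int:
  assumes fm: "finite_measure M" and q: "2 \<le> q" and a: "Lp_mem M q a" and b: "Lp_mem M q b"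
    and nl: "nonlin_ok f"
  shows "integrable M (\<lambda>x. f (a x) * b x)"
proof -
  obtain L where L: "\<And>x y. \<bar>f x - f y\<bar> \<le> L * \<bar>x - y\<bar>" using nl by (auto simp: nonlin_ok_def)
  have mf: "f \<in> borel_measurable borel" using nl by (simp add: nonlin_ok_def borel_measurable_mono)
  have am: "a \<in> borel_measurable M" and bm: "b \<in> borel_measurable M" using a b by (auto simp: Lp_mem_def)
  have ia: "integrable M (\<lambda>x. (a x)^2)" and ib: "integrable M (\<lambda>x. (b x)^2)"
    using Lp_sq[OF fm q a] Lp_sq[OF fm q b] .
  have ic: "integrable M (\<lambda>x. \<bar>f 0\<bar> * (1 + (b x)^2) + \<bar>L\<bar> * ((a x)^2 + (b x)^2))"
    using ia ib fm by (intro Bochner_Integration.integrable_add integrable_mult_right finite_measure.integrable_const)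
  show ?thesis
  proof (rule Bochner_Integration.integrable_bound[OF ic])
    show "(\<lambda>x. f (a x) * b x) \<in> borel_measurable M"
      using measurable_compose[OF am mf] bm by measurable
    show "AE x in M. norm (f (a x) * b x) \<le> norm (\<bar>f 0\<bar> * (1 + (b x)^2) + \<bar>L\<bar> * ((a x)^2 + (b x)^2))"
    proof (rule AE_I2)
      fix x
      have h1: "\<bar>f (a x)\<bar> \<le> \<bar>f 0\<bar> + \<bar>L\<bar> * \<bar>a x\<bar>"
        proof -
        have "L * \<bar>a x\<bar> \<le> \<bar>L\<bar> * \<bar>a x\<bar>" by (intro mult_right_mono) auto
        moreover have "\<bar>f (a x)\<bar> \<le> \<bar>f 0\<bar> + \<bar>f (a x) - f 0\<bar>" by linarith
        ultimately show ?thesis using L[of "a x" 0] by simp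
      qed
      have h2: "\<bar>b x\<bar> \<le> 1 + (b x)^2" proof -
        have "(\<bar>b x\<bar> - 1)^2 = (b x)^2 - 2*\<bar>b x\<bar> + 1" by (simp add: power2_diff power2_abs)
        moreover have "0 \<le> (\<bar>b x\<bar> - 1)^2" by simp
        ultimately show ?thesis using abs_ge_zero[of "b x"] by linarith
      qed
      have h3: "\<bar>a x\<bar> * \<bar>b x\<bar> \<le> (a x)^2 + (b x)^2"
        proof -
        have "(\<bar>a x\<bar> - \<bar>b x\<bar>)^2 = (a x)^2 - 2*(\<bar>a x\<bar>*\<bar>b x\<bar>) + (b x)^2" by (simp add: power2_diff power2_abs)
        moreover have "0 \<le> (\<bar>a x\<bar> - \<bar>b x\<bar>)^2" by simp
        moreover have "0 \<le> \<bar>a x\<bar>*\<bar>b x\<bar>" by simp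
        ultimately show ?thesis by linarith
      qed
      have "\<bar>f (a x) * b x\<bar> = \<bar>f (a x)\<bar> * \<bar>b x\<bar>" by (simp add: abs_mult)
      also have "\<dots> \<le> (\<bar>f 0\<bar> + \<bar>L\<bar> * \<bar>a x\<bar>) * \<bar>b x\<bar>" using h1 by (simp add: mult_right_mono)
      also have "\<dots> = \<bar>f 0\<bar> * \<bar>b x\<bar> + \<bar>L\<bar> * (\<bar>a x\<bar> * \<bar>b x\<bar>)" by (simp add: algebra_simps)
      also have "\<dots> \<le> \<bar>f 0\<bar> * (1 + (b x)^2) + \<bar>L\<bar> * ((a x)^2 + (b x)^2)"
        using h2 h3 by (intro add_mono mult_left_mono) auto
      finally show "norm (f (a x) * b x) \<le> norm (\<bar>f 0\<bar> * (1 + (b x)^2) + \<bar>L\<bar> * ((a x)^2 + (b x)^2))"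
        by simp
    qed
  qed
qed

lemma clip_pos: "clip 0 \<infinity> t = max 0 t"
  by (cases "t \<le> 0") (auto simp: clip_def max_def)

theorem mainTheorem8:
  fixes M :: "'a measure" and q :: ereal
    and emb :: "'v::{real_inner,complete_space} \<Rightarrow> 'a \<Rightarrow> real"
    and A :: "'v \<Rightarrow> 'v \<Rightarrow>\<^sub>L real" and f :: "real \<Rightarrow> real" and K :: "'v set"
    and u1 u2 :: "'v \<Rightarrow>\<^sub>L real" and y1 y2 y :: 'v and t :: real
  assumes "finite_measure M" and "complete_measure M"
    and "2 \<le> q"
    and "embedding_ok M q emb"
    and "operator_ok M emb A"
    and "nonlin_ok f"
    and "admissible_set_ok M emb K"
    and "0 \<le> t" and "t \<le> 1"
    and "VI_solution M emb A f K u1 y1"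
    and "VI_solution M emb A f K u2 y2"
    and "VI_solution M emb A f K (t *\<^sub>R u1 + (1 - t) *\<^sub>R u2) y"
  shows "AE x in M. emb y x \<le> t * emb y1 x + (1 - t) * emb y2 x"
proof -
  note fm = assms(1) and q = assms(3) and nl = assms(6)
  have t0: "0 \<le> t" and t1: "t \<le> 1" using assms by auto
  note E = assms(4)[unfolded embedding_ok_def]
  have eadd: "\<And>v w. AE x in M. emb (v + w) x = emb v x + emb w x"
    using E[THEN conjunct2, THEN conjunct1] by blast
  have escale: "\<And>c v. AE x in M. emb (c *\<^sub>R v) x = c * emb v x"
    using E[THEN conjunct2, THEN conjunct2, THEN conjunct1] by blast
  have Lp: "\<And>v. Lp_mem M q (emb v)"
    using E[THEN conjunct2, THEN conjunct2, THEN conjunct2, THEN conjunct1] by blast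
  have eclip: "\<And>v a1 a2. a1 \<le> 0 \<Longrightarrow> 0 \<le> a2 \<Longrightarrow> \<exists>w. AE x in M. emb w x = clip a1 a2 (emb v x)"
    using E[THEN conjunct2, THEN conjunct2, THEN conjunct2, THEN conjunct2, THEN conjunct2,
       THEN conjunct2, THEN conjunct2, THEN conjunct2] by blast
  note O = assms(5)[unfolded operator_ok_def]
  have bl: "bounded_linear A" using O[THEN conjunct1] .
  have coer: "\<exists>c>0. \<forall>v. A v v \<ge> c * (norm v)\<^sup>2" using O[THEN conjunct2, THEN conjunct1] .
  have trunc: "\<And>v w a1 a2. a1 \<le> 0 \<Longrightarrow> 0 \<le> a2 \<Longrightarrow> (AE x in M. emb w x = clip a1 a2 (emb v x)) \<Longrightarrow>
        min (A v w) (A w v) \<ge> A w w"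
    using O[THEN conjunct2, THEN conjunct2] by blast
  have mono_f: "mono f" and conc: "concave_on UNIV f" using nl by (auto simp: nonlin_ok_def)
  note Ad = assms(7)[unfolded admissible_set_ok_def]
  have cvx: "convex K" using Ad[THEN conjunct2, THEN conjunct2, THEN conjunct1] .
  have Kplus: "\<And>v z w. v \<in> K \<Longrightarrow> (AE x in M. emb w x = max 0 (emb z x)) \<Longrightarrow> v + w \<in> K"
    using Ad[THEN conjunct2, THEN conjunct2, THEN conjunct2, THEN conjunct1] by blast
  have Kmin: "\<And>v1 v2 w. v1 \<in> K \<Longrightarrow> v2 \<in> K \<Longrightarrow> (AE x in M. emb w x = min (emb v1 x) (emb v2 x)) \<Longrightarrow> w \<in> K"
    using Ad[THEN conjunct2, THEN conjunct2, THEN conjunct2, THEN conjunct2] by blast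
  note S1 = assms(10)[unfolded VI_solution_def] and S2 = assms(11)[unfolded VI_solution_def]
    and S3 = assms(12)[unfolded VI_solution_def]
  have y1K: "y1 \<in> K" using S1 by (rule conjunct1)
  have VI1: "\<And>v. v \<in> K \<Longrightarrow> A y1 (v - y1) + (\<integral>x. f (emb y1 x) * emb (v - y1) x \<partial>M) - u1 (v - y1) \<ge> 0"
    using S1[THEN conjunct2] by blast
  have y2K: "y2 \<in> K" using S2 by (rule conjunct1)
  have VI2: "\<And>v. v \<in> K \<Longrightarrow> A y2 (v - y2) + (\<integral>x. f (emb y2 x) * emb (v - y2) x \<partial>M) - u2 (v - y2) \<ge> 0"
    using S2[THEN conjunct2] by blast
  have yK: "y \<in> K" using S3 by (rule conjunct1)
  have VI3: "\<And>v. v \<in> K \<Longrightarrow> A y (v - y) + (\<integral>x. f (emb y x) * emb (v - y) x \<partial>M) - (t *\<^sub>R u1 + (1 - t) *\<^sub>R u2) (v - y) \<ge> 0"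
    using S3[THEN conjunct2] by blast
  define yt where "yt = t *\<^sub>R y1 + (1 - t) *\<^sub>R y2"
  define z where "z = y - yt"
  obtain w where hw: "AE x in M. emb w x = clip 0 \<infinity> (emb z x)" using eclip[of 0 \<infinity> z] by auto
  have hw': "AE x in M. emb w x = max 0 (emb z x)" using hw by (simp add: clip_pos)
  have ytK: "yt \<in> K" unfolding yt_def using cvx y1K y2K t0 t1 by (intro convexD) auto
  have eyt: "AE x in M. emb yt x = t * emb y1 x + (1 - t) * emb y2 x"
    using eadd[of "t *\<^sub>R y1" "(1 - t) *\<^sub>R y2"] escale[of t y1] escale[of "1 - t" y2]
    unfolding yt_def by eventually_elim simp
  have zeq: "z = y + (-1) *\<^sub>R yt" by (simp add: z_def)
  have ez: "AE x in M. emb z x = emb y x - emb yt x"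
    using eadd[of y "(-1) *\<^sub>R yt"] escale[of "-1" yt] unfolding zeq by eventually_elim simp
  have ymw_eq: "y - w = y + (-1) *\<^sub>R w" by simp
  have emw: "AE x in M. emb (- w) x = - emb w x"
    using escale[of "-1" w] by simp
  have ymw: "AE x in M. emb (y - w) x = min (emb y x) (emb yt x)"
    using eadd[of y "(-1) *\<^sub>R w"] escale[of "-1" w] hw' ez unfolding ymw_eq
    by eventually_elim auto
  have ymwK: "y - w \<in> K" using Kmin[OF yK ytK ymw] .
  have y1wK: "y1 + w \<in> K" using Kplus[OF y1K hw'] .
  have y2wK: "y2 + w \<in> K" using Kplus[OF y2K hw'] .
  have V1: "A y1 w + (\<integral>x. f (emb y1 x) * emb w x \<partial>M) - u1 w \<ge> 0"
    using VI1[OF y1wK] by simp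
  have V2: "A y2 w + (\<integral>x. f (emb y2 x) * emb w x \<partial>M) - u2 w \<ge> 0"
    using VI2[OF y2wK] by simp
  have V3: "A y (- w) + (\<integral>x. f (emb y x) * emb (- w) x \<partial>M) - (t *\<^sub>R u1 + (1 - t) *\<^sub>R u2) (- w) \<ge> 0"
    using VI3[OF ymwK] by simp
  have mf: "f \<in> borel_measurable borel" using mono_f by (simp add: borel_measurable_mono)
  have em: "\<And>v. emb v \<in> borel_measurable M" using Lp by (simp add: Lp_mem_def)
  have int: "\<And>a b. integrable M (\<lambda>x. f (emb a x) * emb b x)"
    using prod_int[OF fm q Lp Lp nl] .
  have Iminus: "(\<integral>x. f (emb y x) * emb (- w) x \<partial>M) = - (\<integral>x. f (emb y x) * emb w x \<partial>M)"
  proof -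
    have "(\<integral>x. f (emb y x) * emb (- w) x \<partial>M) = (\<integral>x. - (f (emb y x) * emb w x) \<partial>M)"
    proof (rule integral_cong_AE)
      show "(\<lambda>x. f (emb y x) * emb (- w) x) \<in> borel_measurable M"
        using measurable_compose[OF em mf] em by measurable
      show "(\<lambda>x. - (f (emb y x) * emb w x)) \<in> borel_measurable M"
        using measurable_compose[OF em mf] em by measurable
      show "AE x in M. f (emb y x) * emb (- w) x = - (f (emb y x) * emb w x)"
        using emw by eventually_elim simp
    qed
    then show ?thesis by simp
  qed
  define I where "I = (\<integral>x. f (emb y x) * emb w x \<partial>M)"
  define I1 where "I1 = (\<integral>x. f (emb y1 x) * emb w x \<partial>M)"
  define I2 where "I2 = (\<integral>x. f (emb y2 x) * emb w x \<partial>M)"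
  have lin: "linear A" using bl by (rule bounded_linear.linear)
  have Ayt: "A yt w = t * A y1 w + (1 - t) * A y2 w"
    unfolding yt_def using lin by (simp add: linear_add linear_scale scaleR_blinfun.rep_eq plus_blinfun.rep_eq)
  have Az: "A z w = A y w - A yt w"
    unfolding z_def using lin by (simp add: linear_diff minus_blinfun.rep_eq)
  have V3': "- A y w - I + t * u1 w + (1 - t) * u2 w \<ge> 0"
  proof -
    have u: "(t *\<^sub>R u1 + (1 - t) *\<^sub>R u2) (- w) = - (t * u1 w + (1 - t) * u2 w)"
      by (simp add: blinfun.minus_right plus_blinfun.rep_eq scaleR_blinfun.rep_eq)
    have a: "A y (- w) = - A y w" by (simp add: blinfun.minus_right)
    show ?thesis using V3 Iminus u a unfolding I_def by linarith
  qed
  have V1': "t * A y1 w + t * I1 - t * u1 w \<ge> 0"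
    using mult_nonneg_nonneg[OF t0 V1] unfolding I1_def by (simp add: algebra_simps)
  have V2': "(1 - t) * A y2 w + (1 - t) * I2 - (1 - t) * u2 w \<ge> 0"
    using mult_nonneg_nonneg[of "1 - t", OF _ V2] t1 unfolding I2_def by (simp add: algebra_simps)
  have Dnn: "0 \<le> (\<integral>x. f (emb y x) * emb w x - t * (f (emb y1 x) * emb w x) - (1 - t) * (f (emb y2 x) * emb w x) \<partial>M)"
  proof (rule integral_nonneg_AE)
    show "AE x in M. 0 \<le> f (emb y x) * emb w x - t * (f (emb y1 x) * emb w x) - (1 - t) * (f (emb y2 x) * emb w x)"
      using hw' ez eyt
    proof eventually_elim
      case (elim x)
      show ?case
      proof (cases "emb z x \<le> 0")
        case True then show ?thesis using elim by simp
      next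
        case False
        then have pos: "emb w x = emb y x - emb yt x" "emb yt x < emb y x" using elim by auto
        have c: "(1 - (1 - t)) * f (emb y1 x) + (1 - t) * f (emb y2 x) \<le> f ((1 - (1 - t)) *\<^sub>R emb y1 x + (1 - t) *\<^sub>R emb y2 x)"
          using t0 t1 by (intro concave_onD[OF conc]) auto
        have "f (emb yt x) \<le> f (emb y x)" using mono_f pos by (simp add: monoD)
        then have "t * f (emb y1 x) + (1 - t) * f (emb y2 x) \<le> f (emb y x)" using c elim by simp
        then have "0 \<le> (f (emb y x) - t * f (emb y1 x) - (1 - t) * f (emb y2 x)) * emb w x"
          using pos by simp
        then show ?thesis by (simp add: algebra_simps)
      qed
    qed
  qed
  have Deq: "(\<integral>x. f (emb y x) * emb w x - t * (f (emb y1 x) * emb w x) - (1 - t) * (f (emb y2 x) * emb w x) \<partial>M)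
      = I - t * I1 - (1 - t) * I2"
    unfolding I_def I1_def I2_def using int
    by (simp add: Bochner_Integration.integral_diff Bochner_Integration.integrable_diff)
  have Azw: "A z w \<le> 0" using V1' V2' V3' Dnn Deq Az Ayt by linarith
  have Aww: "A w w \<le> 0" using trunc[of 0 \<infinity> w z] hw Azw by simp
  obtain c where c: "c > 0" "\<And>v. A v v \<ge> c * (norm v)\<^sup>2" using coer by blast
  have "c * (norm w)\<^sup>2 \<le> 0" using c(2)[of w] Aww by linarith
  then have "(norm w)\<^sup>2 \<le> 0" using c(1) by (simp add: mult_le_0_iff)
  then have w0: "w = 0" by simp
  have "AE x in M. emb w x = 0" using escale[of 0 w] w0 by simp
  then show ?thesis using hw' ez eyt by eventually_elim auto
qed

end
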